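(* Let $g(m)=10^{m/5}$ and \[ f(m)=\begin{cases} \binom{m}{2} & \text{if } 1\le m\le 8;\\ \binom{\lfloor m/2\rfloor}{2}\binom{\lceil m/2\rceil}{2}-(\lfloor m/2\rfloor-1)(\lceil m/2\rceil-1)+1 & \text{if } 9\le m\le 13;\\ 10^{\frac{m-1}{5}}+\frac{m+144}{30}\cdot 6^{\frac{m-6}{5}} & \text{if } 14\le m\le 30;\\ 10^{\frac{m-1}{5}}+\frac{m-1}{5}\cdot 6^{\frac{m-6}{5}} & \text{if } m\ge 31. \end{cases} \] Let $n\ge 14$ be an integer. Then: (1) for $r\in\{4,5,6\}$, $\binom{r-1}{2}f(n-r)+(r-1)f(n-r-1)+g(n-r-2)<f(n)$; (2) for $r\in\{4,5,6\}$, $\binom{r-1}{2}f(n-r)+r\,g(n-r-2)+g(n-r-3)<f(n)$; (3) for $r\in\{4,6\}$, $\binom{r-1}{2}f(n-r)+(r-1)g(n-r-1)+6^{\frac{n-r-1}{5}}<f(n)$; (4) for $r\in\{4,6\}$, $\binom{r-1}{2}f(n-r)+\frac{f(4)}{g(4)}(r-1)g(n-r-1)+g(n-r-3)<f(n)$. *)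

theory Defs
  imports Complex_Main
begin

definition g :: "nat \<Rightarrow> real" where
  "g m = 10 powr (real m / 5)"

definition f :: "nat \<Rightarrow> real" where
  "f m = (if m \<le> 8 then real (m choose 2)
          else if m \<le> 13 then
            real ((m div 2) choose 2) * real (((m + 1) div 2) choose 2)
            - (real (m div 2) - 1) * (real ((m + 1) div 2) - 1) + 1
          else if m \<le> 30 then
            10 powr ((real m - 1) / 5) + (real m + 144) / 30 * 6 powr ((real m - 6) / 5)
          else
            10 powr ((real m - 1) / 5) + (real m - 1) / 5 * 6 powr ((real m - 6) / 5))"

end

theory Submission imports Defs begin
definition a :: real where "a = 10 powr (1/5)"
definition b :: real where "b = 6 powr (1/5)"
lemma a5: "a^5 = 10" unfolding a_def by (simp add: powr_realpow[symmetric] powr_powr)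
lemma b5: "b^5 = 6" unfolding b_def by (simp add: powr_realpow[symmetric] powr_powr)
lemma a_pos: "a > 0" unfolding a_def by simp
lemma b_pos: "b > 0" unfolding b_def by simp
lemma pw10: "10 powr (real m / 5) = a^m"
  unfolding a_def by (simp add: powr_realpow[symmetric] powr_powr)
lemma pw6: "6 powr (real m / 5) = b^m"
  unfolding b_def by (simp add: powr_realpow[symmetric] powr_powr)
lemma a_red: "5 \<le> m \<Longrightarrow> a^m = 10 * a^(m-5)"
  by (metis a5 le_add_diff_inverse power_add)
lemma b_red: "5 \<le> m \<Longrightarrow> b^m = 6 * b^(m-5)"
  by (metis b5 le_add_diff_inverse power_add)
lemma a_lo: "1.584893 \<le> a"
proof (rule ccontr)
  assume "\<not> ?thesis"
  then have "a^5 < 1.584893^5" using a_pos by (intro power_strict_mono) auto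
  then show False by (simp add: a5 power_divide)
qed
lemma a_hi: "a \<le> 1.5848932"
proof (rule ccontr)
  assume "\<not> ?thesis"
  then have "1.5848932^5 < a^5" by (intro power_strict_mono) auto
  then show False by (simp add: a5 power_divide)
qed
lemma b_lo: "1.430969 \<le> b"
proof (rule ccontr)
  assume "\<not> ?thesis"
  then have "b^5 < 1.430969^5" using b_pos by (intro power_strict_mono) auto
  then show False by (simp add: b5 power_divide)
qed
lemma b_hi: "b \<le> 1.4309691"
proof (rule ccontr)
  assume "\<not> ?thesis"
  then have "1.4309691^5 < b^5" by (intro power_strict_mono) auto
  then show False by (simp add: b5 power_divide)
qed
lemma abnds: "1.584893^2 \<le> a^2" "a^2 \<le> 1.5848932^2" "1.584893^3 \<le> a^3" "a^3 \<le> 1.5848932^3"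
  "1.584893^4 \<le> a^4" "a^4 \<le> 1.5848932^4"
  "1.430969^2 \<le> b^2" "b^2 \<le> 1.4309691^2" "1.430969^3 \<le> b^3" "b^3 \<le> 1.4309691^3"
  "1.430969^4 \<le> b^4" "b^4 \<le> 1.4309691^4"
  using a_lo a_hi b_lo b_hi by (auto intro!: power_mono)
lemma abnds2: "1.584893^2 \<le> a*a" "a*a \<le> 1.5848932^2" "1.430969^2 \<le> b*b" "b*b \<le> 1.4309691^2"
  using abnds(1,2,7,8) by (simp_all only: power2_eq_square)

lemma f_eval: "f m = (if m \<le> 8 then real (m choose 2)
          else if m \<le> 13 then
            real ((m div 2) choose 2) * real (((m + 1) div 2) choose 2)
            - (real (m div 2) - 1) * (real ((m + 1) div 2) - 1) + 1
          else if m \<le> 30 then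
            a^(m-1) + (real m + 144) / 30 * b^(m-6)
          else a^(m-1) + (real m - 1) / 5 * b^(m-6))"
proof -
  have "m > 13 \<Longrightarrow> 10 powr ((real m - 1) / 5) = a^(m-1)"
    using pw10[of "m-1"] by (simp add: of_nat_diff)
  moreover have "m > 13 \<Longrightarrow> 6 powr ((real m - 6) / 5) = b^(m-6)"
    using pw6[of "m-6"] by (simp add: of_nat_diff)
  ultimately show ?thesis unfolding f_def by auto
qed
lemma g_eval: "g m = a^m" unfolding g_def pw10 ..
lemma pw6n: "6 powr (numeral k / 5) = b ^ numeral k"
  using pw6[of "numeral k"] by simp
lemma div_a4: "x / a^4 = x * a / 10"
proof -
  have h: "a^4 * a = 10" using a5 by (simp add: eval_nat_numeral algebra_simps)
  show ?thesis using a_pos h by (simp add: field_simps)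
qed
lemma amul: "a^k * a = a^Suc k" "a * a^k = a^Suc k" by (simp_all add: power_Suc2 power_Suc)

definition Pr :: "nat \<Rightarrow> bool" where "Pr n \<longleftrightarrow> (\<forall>r \<in> {4, 5, 6::nat}.
            real ((r - 1) choose 2) * f (n - r) + real (r - 1) * f (n - r - 1)
              + g (n - r - 2) < f n)
       \<and> (\<forall>r \<in> {4, 5, 6::nat}.
            real ((r - 1) choose 2) * f (n - r) + real r * g (n - r - 2)
              + g (n - r - 3) < f n)
       \<and> (\<forall>r \<in> {4, 6::nat}.
            real ((r - 1) choose 2) * f (n - r) + real (r - 1) * g (n - r - 1)
              + 6 powr ((real n - real r - 1) / 5) < f n)
       \<and> (\<forall>r \<in> {4, 6::nat}.
            real ((r - 1) choose 2) * f (n - r) + f 4 / g 4 * real (r - 1) * g (n - r - 1)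
              + g (n - r - 3) < f n)"

lemma Pr_14: "Pr 14"
  apply (simp add: Pr_def f_eval g_eval a_red b_red choose_two pw6n div_a4 mult.assoc amul)
  using a_lo a_hi b_lo b_hi abnds abnds2 by (simp add: power_divide, (linarith)?)
lemma Pr_15: "Pr 15"
  apply (simp add: Pr_def f_eval g_eval a_red b_red choose_two pw6n div_a4 mult.assoc amul)
  using a_lo a_hi b_lo b_hi abnds abnds2 by (simp add: power_divide, (linarith)?)
lemma Pr_16: "Pr 16"
  apply (simp add: Pr_def f_eval g_eval a_red b_red choose_two pw6n div_a4 mult.assoc amul)
  using a_lo a_hi b_lo b_hi abnds abnds2 by (simp add: power_divide, (linarith)?)
lemma Pr_17: "Pr 17"
  apply (simp add: Pr_def f_eval g_eval a_red b_red choose_two pw6n div_a4 mult.assoc amul)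
  using a_lo a_hi b_lo b_hi abnds abnds2 by (simp add: power_divide, (linarith)?)
lemma Pr_18: "Pr 18"
  apply (simp add: Pr_def f_eval g_eval a_red b_red choose_two pw6n div_a4 mult.assoc amul)
  using a_lo a_hi b_lo b_hi abnds abnds2 by (simp add: power_divide, (linarith)?)
lemma Pr_19: "Pr 19"
  apply (simp add: Pr_def f_eval g_eval a_red b_red choose_two pw6n div_a4 mult.assoc amul)
  using a_lo a_hi b_lo b_hi abnds abnds2 by (simp add: power_divide, (linarith)?)
lemma Pr_20: "Pr 20"
  apply (simp add: Pr_def f_eval g_eval a_red b_red choose_two pw6n div_a4 mult.assoc amul)
  using a_lo a_hi b_lo b_hi abnds abnds2 by (simp add: power_divide, (linarith)?)
lemma Pr_21: "Pr 21"
  apply (simp add: Pr_def f_eval g_eval a_red b_red choose_two pw6n div_a4 mult.assoc amul)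
  using a_lo a_hi b_lo b_hi abnds abnds2 by (simp add: power_divide, (linarith)?)
lemma Pr_22: "Pr 22"
  apply (simp add: Pr_def f_eval g_eval a_red b_red choose_two pw6n div_a4 mult.assoc amul)
  using a_lo a_hi b_lo b_hi abnds abnds2 by (simp add: power_divide, (linarith)?)
lemma Pr_23: "Pr 23"
  apply (simp add: Pr_def f_eval g_eval a_red b_red choose_two pw6n div_a4 mult.assoc amul)
  using a_lo a_hi b_lo b_hi abnds abnds2 by (simp add: power_divide, (linarith)?)
lemma Pr_24: "Pr 24"
  apply (simp add: Pr_def f_eval g_eval a_red b_red choose_two pw6n div_a4 mult.assoc amul)
  using a_lo a_hi b_lo b_hi abnds abnds2 by (simp add: power_divide, (linarith)?)
lemma Pr_25: "Pr 25"
  apply (simp add: Pr_def f_eval g_eval a_red b_red choose_two pw6n div_a4 mult.assoc amul)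
  using a_lo a_hi b_lo b_hi abnds abnds2 by (simp add: power_divide, (linarith)?)
lemma Pr_26: "Pr 26"
  apply (simp add: Pr_def f_eval g_eval a_red b_red choose_two pw6n div_a4 mult.assoc amul)
  using a_lo a_hi b_lo b_hi abnds abnds2 by (simp add: power_divide, (linarith)?)
lemma Pr_27: "Pr 27"
  apply (simp add: Pr_def f_eval g_eval a_red b_red choose_two pw6n div_a4 mult.assoc amul)
  using a_lo a_hi b_lo b_hi abnds abnds2 by (simp add: power_divide, (linarith)?)
lemma Pr_28: "Pr 28"
  apply (simp add: Pr_def f_eval g_eval a_red b_red choose_two pw6n div_a4 mult.assoc amul)
  using a_lo a_hi b_lo b_hi abnds abnds2 by (simp add: power_divide, (linarith)?)
lemma Pr_29: "Pr 29"
  apply (simp add: Pr_def f_eval g_eval a_red b_red choose_two pw6n div_a4 mult.assoc amul)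
  using a_lo a_hi b_lo b_hi abnds abnds2 by (simp add: power_divide, (linarith)?)
lemma Pr_30: "Pr 30"
  apply (simp add: Pr_def f_eval g_eval a_red b_red choose_two pw6n div_a4 mult.assoc amul)
  using a_lo a_hi b_lo b_hi abnds abnds2 by (simp add: power_divide, (linarith)?)
lemma Pr_31: "Pr 31"
  apply (simp add: Pr_def f_eval g_eval a_red b_red choose_two pw6n div_a4 mult.assoc amul)
  using a_lo a_hi b_lo b_hi abnds abnds2 by (simp add: power_divide, (linarith)?)
lemma Pr_32: "Pr 32"
  apply (simp add: Pr_def f_eval g_eval a_red b_red choose_two pw6n div_a4 mult.assoc amul)
  using a_lo a_hi b_lo b_hi abnds abnds2 by (simp add: power_divide, (linarith)?)
lemma Pr_33: "Pr 33"
  apply (simp add: Pr_def f_eval g_eval a_red b_red choose_two pw6n div_a4 mult.assoc amul)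
  using a_lo a_hi b_lo b_hi abnds abnds2 by (simp add: power_divide, (linarith)?)
lemma Pr_34: "Pr 34"
  apply (simp add: Pr_def f_eval g_eval a_red b_red choose_two pw6n div_a4 mult.assoc amul)
  using a_lo a_hi b_lo b_hi abnds abnds2 by (simp add: power_divide, (linarith)?)
lemma Pr_35: "Pr 35"
  apply (simp add: Pr_def f_eval g_eval a_red b_red choose_two pw6n div_a4 mult.assoc amul)
  using a_lo a_hi b_lo b_hi abnds abnds2 by (simp add: power_divide, (linarith)?)
lemma Pr_36: "Pr 36"
  apply (simp add: Pr_def f_eval g_eval a_red b_red choose_two pw6n div_a4 mult.assoc amul)
  using a_lo a_hi b_lo b_hi abnds abnds2 by (simp add: power_divide, (linarith)?)
lemma Pr_37: "Pr 37"
  apply (simp add: Pr_def f_eval g_eval a_red b_red choose_two pw6n div_a4 mult.assoc amul)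
  using a_lo a_hi b_lo b_hi abnds abnds2 by (simp add: power_divide, (linarith)?)
lemma f4: "f 4 = 6" by (simp add: f_eval choose_two)
definition XA :: "nat \<Rightarrow> nat \<Rightarrow> real" where "XA k i = a^k * a^i"
definition YB :: "nat \<Rightarrow> nat \<Rightarrow> real" where "YB k i = b^k * b^i"
definition ZB :: "nat \<Rightarrow> nat \<Rightarrow> real" where "ZB k i = real k * b^k * b^i"
lemma xa_red: "5 \<le> i \<Longrightarrow> XA k i = 10 * XA k (i-5)"
  unfolding XA_def using a_red[of i] by simp
lemma yb_red: "5 \<le> i \<Longrightarrow> YB k i = 6 * YB k (i-5)"
  unfolding YB_def using b_red[of i] by simp
lemma zb_red: "5 \<le> i \<Longrightarrow> ZB k i = 6 * ZB k (i-5)"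
  unfolding ZB_def using b_red[of i] by simp
lemma fk: "31 \<le> c \<Longrightarrow> f (c + k) = XA k (c-1) + ZB k (c-6) / 5 + (real c - 1)/5 * YB k (c-6)"
proof -
  assume c: "31 \<le> c"
  have e1: "c + k - 1 = (c - 1) + k" "c + k - 6 = (c - 6) + k" using c by auto
  have "f (c + k) = a^(c+k-1) + (real (c+k) - 1)/5 * b^(c+k-6)"
    using c by (simp add: f_eval)
  also have "\<dots> = a^k * a^(c-1) + (real k + (real c - 1))/5 * (b^k * b^(c-6))"
    unfolding e1 power_add by (simp add: algebra_simps)
  finally show ?thesis by (simp add: XA_def YB_def ZB_def field_simps)
qed
lemma fk': "31 \<le> c \<Longrightarrow> f (k + c) = XA k (c-1) + ZB k (c-6) / 5 + (real c - 1)/5 * YB k (c-6)"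
  using fk[of c k] by (simp add: add.commute)
lemma apow: "a^(c+k) = XA k c" "a^(k+c) = XA k c" by (simp_all add: XA_def power_add)
lemma s6k: "6 powr ((numeral c + real k)/5) = YB k (numeral c)"
  using pw6[of "numeral c + k"] by (simp add: power_add YB_def)
lemma adiv: "4 \<le> c \<Longrightarrow> x * XA k c / a^4 = x * XA k (c-4)"
  using a_pos by (simp add: XA_def power_diff)
lemma bern: "YB k 0 + 0.1075 * ZB k 0 \<le> XA k 0"
proof -
  have d: "0.1075 \<le> a/b - 1" using a_lo b_hi b_pos by (simp add: field_simps)
  have "1 + real k * (a/b - 1) \<le> (1 + (a/b - 1))^k"
    by (rule Bernoulli_inequality) (use a_pos b_pos in simp)
  then have "1 + real k * 0.1075 \<le> (a/b)^k"
    using d by (smt (verit) mult_left_mono of_nat_0_le_iff)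
  then have "b^k * (1 + real k * 0.1075) \<le> b^k * (a/b)^k"
    using b_pos by (intro mult_left_mono) auto
  then show ?thesis using b_pos by (simp add: power_divide algebra_simps XA_def YB_def ZB_def)
qed
lemma XAb: "lo \<le> a^i \<Longrightarrow> XA k 0 * lo \<le> XA k i" "a^i \<le> hi \<Longrightarrow> XA k i \<le> XA k 0 * hi"
  unfolding XA_def using a_pos by (auto intro!: mult_left_mono)
lemma YBb: "lo \<le> b^i \<Longrightarrow> YB k 0 * lo \<le> YB k i" "b^i \<le> hi \<Longrightarrow> YB k i \<le> YB k 0 * hi"
  unfolding YB_def using b_pos by (auto intro!: mult_left_mono)
lemma ZBb: "lo \<le> b^i \<Longrightarrow> ZB k 0 * lo \<le> ZB k i" "b^i \<le> hi \<Longrightarrow> ZB k i \<le> ZB k 0 * hi"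
  unfolding ZB_def using b_pos by (auto intro!: mult_left_mono)
lemma a1b: "1.584893 \<le> a^1" "a^1 \<le> 1.5848932" "1.430969 \<le> b^1" "b^1 \<le> 1.4309691"
  using a_lo a_hi b_lo b_hi by simp_all
lemma bb0_0: "XA k 0 * 1.584893 \<le> XA k 1" by (rule XAb(1)[OF a1b(1)])
lemma bb0_1: "XA k 1 \<le> XA k 0 * 1.5848932" by (rule XAb(2)[OF a1b(2)])
lemma bb0_2: "YB k 0 * 1.430969 \<le> YB k 1" by (rule YBb(1)[OF a1b(3)])
lemma bb0_3: "YB k 1 \<le> YB k 0 * 1.4309691" by (rule YBb(2)[OF a1b(4)])
lemma bb0_4: "ZB k 0 * 1.430969 \<le> ZB k 1" by (rule ZBb(1)[OF a1b(3)])
lemma bb0_5: "ZB k 1 \<le> ZB k 0 * 1.4309691" by (rule ZBb(2)[OF a1b(4)])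
lemma bb1_0: "XA k 0 * 1.584893^2 \<le> XA k 2" by (rule XAb(1)[OF abnds(1)])
lemma bb1_1: "XA k 2 \<le> XA k 0 * 1.5848932^2" by (rule XAb(2)[OF abnds(2)])
lemma bb1_2: "YB k 0 * 1.430969^2 \<le> YB k 2" by (rule YBb(1)[OF abnds(7)])
lemma bb1_3: "YB k 2 \<le> YB k 0 * 1.4309691^2" by (rule YBb(2)[OF abnds(8)])
lemma bb1_4: "ZB k 0 * 1.430969^2 \<le> ZB k 2" by (rule ZBb(1)[OF abnds(7)])
lemma bb1_5: "ZB k 2 \<le> ZB k 0 * 1.4309691^2" by (rule ZBb(2)[OF abnds(8)])
lemma bb2_0: "XA k 0 * 1.584893^3 \<le> XA k 3" by (rule XAb(1)[OF abnds(3)])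
lemma bb2_1: "XA k 3 \<le> XA k 0 * 1.5848932^3" by (rule XAb(2)[OF abnds(4)])
lemma bb2_2: "YB k 0 * 1.430969^3 \<le> YB k 3" by (rule YBb(1)[OF abnds(9)])
lemma bb2_3: "YB k 3 \<le> YB k 0 * 1.4309691^3" by (rule YBb(2)[OF abnds(10)])
lemma bb2_4: "ZB k 0 * 1.430969^3 \<le> ZB k 3" by (rule ZBb(1)[OF abnds(9)])
lemma bb2_5: "ZB k 3 \<le> ZB k 0 * 1.4309691^3" by (rule ZBb(2)[OF abnds(10)])
lemma bb3_0: "XA k 0 * 1.584893^4 \<le> XA k 4" by (rule XAb(1)[OF abnds(5)])
lemma bb3_1: "XA k 4 \<le> XA k 0 * 1.5848932^4" by (rule XAb(2)[OF abnds(6)])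
lemma bb3_2: "YB k 0 * 1.430969^4 \<le> YB k 4" by (rule YBb(1)[OF abnds(11)])
lemma bb3_3: "YB k 4 \<le> YB k 0 * 1.4309691^4" by (rule YBb(2)[OF abnds(12)])
lemma bb3_4: "ZB k 0 * 1.430969^4 \<le> ZB k 4" by (rule ZBb(1)[OF abnds(11)])
lemma bb3_5: "ZB k 4 \<le> ZB k 0 * 1.4309691^4" by (rule ZBb(2)[OF abnds(12)])
lemmas allb = bb0_0 bb0_1 bb0_2 bb0_3 bb0_4 bb0_5 bb1_0 bb1_1 bb1_2 bb1_3 bb1_4 bb1_5 bb2_0 bb2_1 bb2_2 bb2_3 bb2_4 bb2_5 bb3_0 bb3_1 bb3_2 bb3_3 bb3_4 bb3_5
lemma pos0: "0 < YB k 0" "0 \<le> ZB k 0" using b_pos by (simp_all add: YB_def ZB_def)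

lemma Pr_big: "Pr (k+38)"
  apply (simp add: Pr_def g_eval choose_two f4 fk fk' apow s6k adiv)
  apply (simp add: xa_red yb_red zb_red)
  using allb[of k] bern[of k] pos0[of k]
  by (simp add: power_divide, (linarith)?)
theorem lemma2p11:
  fixes n :: nat
  assumes "n \<ge> 14"
  shows "(\<forall>r \<in> {4, 5, 6::nat}.
            real ((r - 1) choose 2) * f (n - r) + real (r - 1) * f (n - r - 1)
              + g (n - r - 2) < f n)
       \<and> (\<forall>r \<in> {4, 5, 6::nat}.
            real ((r - 1) choose 2) * f (n - r) + real r * g (n - r - 2)
              + g (n - r - 3) < f n)
       \<and> (\<forall>r \<in> {4, 6::nat}.
            real ((r - 1) choose 2) * f (n - r) + real (r - 1) * g (n - r - 1)
              + 6 powr ((real n - real r - 1) / 5) < f n)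
       \<and> (\<forall>r \<in> {4, 6::nat}.
            real ((r - 1) choose 2) * f (n - r) + f 4 / g 4 * real (r - 1) * g (n - r - 1)
              + g (n - r - 3) < f n)"
proof -
  have "Pr n"
  proof (cases "n \<ge> 38")
    case True
    then show ?thesis using Pr_big[of "n - 38"] by simp
  next
    case False
    then have "n = 14 \<or> n = 15 \<or> n = 16 \<or> n = 17 \<or> n = 18 \<or> n = 19 \<or> n = 20 \<or> n = 21 \<or> n = 22 \<or> n = 23 \<or> n = 24 \<or> n = 25 \<or> n = 26 \<or> n = 27 \<or> n = 28 \<or> n = 29 \<or> n = 30 \<or> n = 31 \<or> n = 32 \<or> n = 33 \<or> n = 34 \<or> n = 35 \<or> n = 36 \<or> n = 37" using assms by arith
    then show ?thesis using Pr_14 Pr_15 Pr_16 Pr_17 Pr_18 Pr_19 Pr_20 Pr_21 Pr_22 Pr_23 Pr_24 Pr_25 Pr_26 Pr_27 Pr_28 Pr_29 Pr_30 Pr_31 Pr_32 Pr_33 Pr_34 Pr_35 Pr_36 Pr_37 by auto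
  qed
  then show ?thesis unfolding Pr_def .
qed

end
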